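(* Let $G$ be a finite cyclic group (written additively) and let $\mathcal A=\mathcal O(K,G)$ be an orbit S-ring over $G$ for some subgroup $K\le\mathrm{Aut}(G)$. Suppose there is a basic set $X$ of $\mathcal A$ such that $X^{(-1)}\subseteq X+X$ and $X$ generates $G$. Then there exists an integer $b$ such that $Y^{(b)}=Y^{(-b-1)}=Y$ for every basic set $Y$ of $\mathcal A$. In particular, $Y^{(-1)}\subseteq Y+Y$ for every basic set $Y$.
   Context: An S-ring over a finite group $G$ is a subring $\mathcal A$ of the group ring $\mathbb{Z}[G]$ having a $\mathbb{Z}$-basis $\{\underline X:X\in\mathcal S\}$ for a partition $\mathcal S$ of $G$ with $\{0\}\in\mathcal S$ and $X^{(-1)}\in\mathcal S$ for all $X\in\mathcal S$, where $\underline X=\sum_{x\in X}x$; elements of $\mathcal S$ are basic sets. For $K\le\mathrm{Aut}(G)$, $\mathcal O(K,G)$ is the S-ring whose basic sets are the orbits of $K$ on $G$. For $X\subseteq G$ and an integer $m$, $X^{(m)}=\{mx:x\in X\}$, and $X+X=\{x+x':x,x'\in X\}$. *)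

theory Defs
  imports "HOL-Algebra.Elementary_Groups" "HOL-Algebra.Bij"
begin

text \<open>Group G written multiplicatively (HOL-Algebra); additive notation of the paper
  corresponds: x + y = x \<otimes> y, m x = x [^] m.\<close>

definition orbitK :: "('a \<Rightarrow> 'a) set \<Rightarrow> 'a \<Rightarrow> 'a set" where
  "orbitK K x = {\<sigma> x | \<sigma>. \<sigma> \<in> K}"

definition orbit_basic_sets :: "('a, 'b) monoid_scheme \<Rightarrow> ('a \<Rightarrow> 'a) set \<Rightarrow> 'a set set" where
  "orbit_basic_sets G K = orbitK K ` carrier G"

definition set_pow :: "('a, 'b) monoid_scheme \<Rightarrow> 'a set \<Rightarrow> int \<Rightarrow> 'a set" where
  "set_pow G X m = (\<lambda>x. x [^]\<^bsub>G\<^esub> m) ` X"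

definition set_sum :: "('a, 'b) monoid_scheme \<Rightarrow> 'a set \<Rightarrow> 'a set \<Rightarrow> 'a set" where
  "set_sum G X Y = {x \<otimes>\<^bsub>G\<^esub> y | x y. x \<in> X \<and> y \<in> Y}"

end

theory Submission
  imports Defs
begin

lemma auto_mult_apply:
  assumes "\<sigma> \<in> auto G" "\<rho> \<in> auto G" "y \<in> carrier G"
  shows "(\<sigma> \<otimes>\<^bsub>AutoGroup G\<^esub> \<rho>) y = \<sigma> (\<rho> y)"
  using assms by (simp add: AutoGroup_def BijGroup_def compose_def auto_def)

lemma auto_hom: "\<sigma> \<in> auto G \<Longrightarrow> \<sigma> \<in> hom G G"
  by (simp add: auto_def)

lemma orbit_image:
  assumes G: "group G" and K: "subgroup K (AutoGroup G)" and s: "\<sigma> \<in> K"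
    and y: "y \<in> carrier G"
  shows "\<sigma> ` orbitK K y = orbitK K y"
proof -
  interpret A: group "AutoGroup G" using G group.AutoGroup by blast
  have KA: "\<And>f. f \<in> K \<Longrightarrow> f \<in> auto G"
    using subgroup.subset[OF K] by (auto simp: AutoGroup_def)
  show ?thesis
  proof
    show "\<sigma> ` orbitK K y \<subseteq> orbitK K y"
    proof
      fix z assume "z \<in> \<sigma> ` orbitK K y"
      then obtain \<rho> where r: "\<rho> \<in> K" "z = \<sigma> (\<rho> y)" by (auto simp: orbitK_def)
      have "z = (\<sigma> \<otimes>\<^bsub>AutoGroup G\<^esub> \<rho>) y" using r s KA y auto_mult_apply by metis
      moreover have "\<sigma> \<otimes>\<^bsub>AutoGroup G\<^esub> \<rho> \<in> K" using r s subgroup.m_closed[OF K] by blast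
      ultimately show "z \<in> orbitK K y" by (auto simp: orbitK_def)
    qed
  next
    show "orbitK K y \<subseteq> \<sigma> ` orbitK K y"
    proof
      fix z assume "z \<in> orbitK K y"
      then obtain \<rho> where r: "\<rho> \<in> K" "z = \<rho> y" by (auto simp: orbitK_def)
      define \<tau> where "\<tau> = inv\<^bsub>AutoGroup G\<^esub> \<sigma> \<otimes>\<^bsub>AutoGroup G\<^esub> \<rho>"
      have tK: "\<tau> \<in> K" unfolding \<tau>_def
        using r s subgroup.m_closed[OF K] subgroup.m_inv_closed[OF K] by blast
      have sc: "\<sigma> \<in> carrier (AutoGroup G)" "\<rho> \<in> carrier (AutoGroup G)"
        using s r subgroup.subset[OF K] by auto
      have "\<sigma> \<otimes>\<^bsub>AutoGroup G\<^esub> \<tau> = \<rho>" unfolding \<tau>_def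
        using sc by (simp add: A.m_assoc[symmetric])
      hence "z = \<sigma> (\<tau> y)" using r s tK KA y auto_mult_apply by metis
      thus "z \<in> \<sigma> ` orbitK K y" using tK by (auto simp: orbitK_def)
    qed
  qed
qed

lemma cyclic_auto_pow:
  assumes G: "group G" and c: "cyclic_group G" and s: "\<sigma> \<in> auto G"
  shows "\<exists>a::int. \<forall>z \<in> carrier G. \<sigma> z = z [^]\<^bsub>G\<^esub> a"
proof -
  interpret group G by (rule G)
  obtain g where g: "g \<in> carrier G" "carrier G = range (\<lambda>n::int. g [^]\<^bsub>G\<^esub> n)"
    using c cyclic_group by blast
  have h: "\<sigma> \<in> hom G G" using s by (simp add: auto_def)
  have "\<sigma> g \<in> carrier G" using h g(1) by (auto simp: hom_def)
  then obtain a :: int where a: "\<sigma> g = g [^]\<^bsub>G\<^esub> a" using g(2) by auto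
  have "\<forall>z \<in> carrier G. \<sigma> z = z [^]\<^bsub>G\<^esub> a"
  proof
    fix z assume "z \<in> carrier G"
    then obtain k::int where k: "z = g [^]\<^bsub>G\<^esub> k" using g(2) by auto
    have "\<sigma> z = (\<sigma> g) [^]\<^bsub>G\<^esub> k" using k hom_int_pow[OF h g(1) G G] by simp
    also have "\<dots> = g [^]\<^bsub>G\<^esub> (a * k)" using a g(1) by (simp add: int_pow_pow)
    also have "\<dots> = z [^]\<^bsub>G\<^esub> a" using k g(1) by (simp add: int_pow_pow mult.commute)
    finally show "\<sigma> z = z [^]\<^bsub>G\<^esub> a" .
  qed
  thus ?thesis by blast
qed

theorem lemma4p6:
  fixes G :: "('a, 'b) monoid_scheme" and K :: "('a \<Rightarrow> 'a) set" and X :: "'a set"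
  assumes "group G" and "finite (carrier G)" and "cyclic_group G"
    and "subgroup K (AutoGroup G)"
    and "X \<in> orbit_basic_sets G K"
    and "set_pow G X (-1) \<subseteq> set_sum G X X"
    and "generate G X = carrier G"
  shows "(\<exists>b::int. \<forall>Y \<in> orbit_basic_sets G K.
            set_pow G Y b = Y \<and> set_pow G Y (- b - 1) = Y)
         \<and> (\<forall>Y \<in> orbit_basic_sets G K. set_pow G Y (-1) \<subseteq> set_sum G Y Y)"
proof -
  interpret group G by (rule assms(1))
  interpret C: comm_group G using cyclic_imp_abelian_group assms(3) by blast
  have KA: "\<And>f. f \<in> K \<Longrightarrow> f \<in> auto G"
    using subgroup.subset[OF assms(4)] by (auto simp: AutoGroup_def)
  have KH: "\<And>f. f \<in> K \<Longrightarrow> f \<in> hom G G" using KA auto_hom by blast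
  obtain x0 where x0: "x0 \<in> carrier G" "X = orbitK K x0"
    using assms(5) by (auto simp: orbit_basic_sets_def)
  have one: "\<one>\<^bsub>AutoGroup G\<^esub> \<in> K" using subgroup.one_closed[OF assms(4)] .
  have "x0 = \<one>\<^bsub>AutoGroup G\<^esub> x0" using x0(1) by (simp add: AutoGroup_def BijGroup_def)
  hence "x0 \<in> X" using one x0(2) by (auto simp: orbitK_def)
  hence "x0 [^]\<^bsub>G\<^esub> (-1::int) \<in> set_sum G X X" using assms(6) by (auto simp: set_pow_def)
  then obtain \<sigma> \<tau> where st: "\<sigma> \<in> K" "\<tau> \<in> K" "x0 [^]\<^bsub>G\<^esub> (-1::int) = \<sigma> x0 \<otimes>\<^bsub>G\<^esub> \<tau> x0"
    using x0(2) by (auto simp: set_sum_def orbitK_def)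
  obtain a :: int where a: "\<forall>z \<in> carrier G. \<sigma> z = z [^]\<^bsub>G\<^esub> a"
    using cyclic_auto_pow[OF assms(1,3) KA[OF st(1)]] by blast
  obtain c :: int where c: "\<forall>z \<in> carrier G. \<tau> z = z [^]\<^bsub>G\<^esub> c"
    using cyclic_auto_pow[OF assms(1,3) KA[OF st(2)]] by blast
  define m where "m = a + c + 1"
  have x0m: "x0 [^]\<^bsub>G\<^esub> m = \<one>\<^bsub>G\<^esub>"
  proof -
    have "x0 [^]\<^bsub>G\<^esub> m = x0 [^]\<^bsub>G\<^esub> a \<otimes>\<^bsub>G\<^esub> x0 [^]\<^bsub>G\<^esub> c \<otimes>\<^bsub>G\<^esub> x0 [^]\<^bsub>G\<^esub> (1::int)"
      unfolding m_def using x0(1) by (simp add: int_pow_mult)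
    also have "\<dots> = x0 [^]\<^bsub>G\<^esub> (-1::int) \<otimes>\<^bsub>G\<^esub> x0 [^]\<^bsub>G\<^esub> (1::int)" using st(3) a c x0(1) by simp
    also have "\<dots> = \<one>\<^bsub>G\<^esub>" using x0(1) by (simp add: int_pow_neg)
    finally show ?thesis .
  qed
  define H where "H = {z \<in> carrier G. z [^]\<^bsub>G\<^esub> m = \<one>\<^bsub>G\<^esub>}"
  have Hsub: "subgroup H G"
  proof (rule subgroupI)
    show "H \<subseteq> carrier G" by (auto simp: H_def)
    show "H \<noteq> {}" using x0m x0(1) by (auto simp: H_def)
    show "\<And>z. z \<in> H \<Longrightarrow> inv\<^bsub>G\<^esub> z \<in> H"
      by (auto simp: H_def int_pow_inv)
    show "\<And>z w. z \<in> H \<Longrightarrow> w \<in> H \<Longrightarrow> z \<otimes>\<^bsub>G\<^esub> w \<in> H"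
      by (auto simp: H_def C.int_pow_distrib)
  qed
  have "X \<subseteq> H"
  proof
    fix z assume "z \<in> X"
    then obtain \<rho> where r: "\<rho> \<in> K" "z = \<rho> x0" using x0(2) by (auto simp: orbitK_def)
    have zc: "z \<in> carrier G" using r KH x0(1) by (auto simp: hom_def)
    have "z [^]\<^bsub>G\<^esub> m = \<rho> (x0 [^]\<^bsub>G\<^esub> m)" using r hom_int_pow[OF KH[OF r(1)] x0(1) assms(1) assms(1)] by simp
    also have "\<dots> = \<one>\<^bsub>G\<^esub>" using x0m hom_one[OF KH[OF r(1)] assms(1) assms(1)] by simp
    finally show "z \<in> H" using zc by (simp add: H_def)
  qed
  hence allm: "\<forall>z \<in> carrier G. z [^]\<^bsub>G\<^esub> m = \<one>\<^bsub>G\<^esub>"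
    using generate_subgroup_incl[OF _ Hsub] assms(7) by (auto simp: H_def)
  have eqc: "\<forall>z \<in> carrier G. z [^]\<^bsub>G\<^esub> (- a - 1) = \<tau> z"
  proof
    fix z assume z: "z \<in> carrier G"
    have "z [^]\<^bsub>G\<^esub> (- a - 1) = z [^]\<^bsub>G\<^esub> (- a - 1) \<otimes>\<^bsub>G\<^esub> z [^]\<^bsub>G\<^esub> m" using allm z by simp
    also have "\<dots> = z [^]\<^bsub>G\<^esub> c" using z unfolding m_def by (simp add: int_pow_mult[symmetric])
    finally show "z [^]\<^bsub>G\<^esub> (- a - 1) = \<tau> z" using c z by simp
  qed
  have eqi: "\<forall>z \<in> carrier G. z [^]\<^bsub>G\<^esub> (-1::int) = \<sigma> z \<otimes>\<^bsub>G\<^esub> \<tau> z"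
  proof
    fix z assume z: "z \<in> carrier G"
    have "z [^]\<^bsub>G\<^esub> (-1::int) = z [^]\<^bsub>G\<^esub> (-1::int) \<otimes>\<^bsub>G\<^esub> z [^]\<^bsub>G\<^esub> m" using allm z by simp
    also have "\<dots> = z [^]\<^bsub>G\<^esub> ((-1) + m)" using z by (simp only: int_pow_mult)
    also have "\<dots> = z [^]\<^bsub>G\<^esub> (a + c)" unfolding m_def by simp
    also have "\<dots> = z [^]\<^bsub>G\<^esub> a \<otimes>\<^bsub>G\<^esub> z [^]\<^bsub>G\<^esub> c" using z by (simp add: int_pow_mult)
    finally show "z [^]\<^bsub>G\<^esub> (-1::int) = \<sigma> z \<otimes>\<^bsub>G\<^esub> \<tau> z" using a c z by simp
  qed
  have Ysub: "\<And>y. y \<in> carrier G \<Longrightarrow> orbitK K y \<subseteq> carrier G"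
    using KH by (auto simp: orbitK_def hom_def)
  have P1: "\<forall>Y \<in> orbit_basic_sets G K. set_pow G Y a = Y \<and> set_pow G Y (- a - 1) = Y"
  proof
    fix Y assume "Y \<in> orbit_basic_sets G K"
    then obtain y where y: "y \<in> carrier G" "Y = orbitK K y" by (auto simp: orbit_basic_sets_def)
    have "set_pow G Y a = \<sigma> ` Y" unfolding set_pow_def
      using a Ysub[OF y(1)] y(2) by (intro image_cong) auto
    moreover have "set_pow G Y (- a - 1) = \<tau> ` Y" unfolding set_pow_def
      using eqc Ysub[OF y(1)] y(2) by (intro image_cong) auto
    ultimately show "set_pow G Y a = Y \<and> set_pow G Y (- a - 1) = Y"
      using orbit_image[OF assms(1,4) st(1) y(1)] orbit_image[OF assms(1,4) st(2) y(1)] y(2)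
      by simp
  qed
  have P2: "\<forall>Y \<in> orbit_basic_sets G K. set_pow G Y (-1) \<subseteq> set_sum G Y Y"
  proof
    fix Y assume "Y \<in> orbit_basic_sets G K"
    then obtain y where y: "y \<in> carrier G" "Y = orbitK K y" by (auto simp: orbit_basic_sets_def)
    have s1: "\<sigma> ` Y = Y" "\<tau> ` Y = Y"
      using orbit_image[OF assms(1,4) st(1) y(1)] orbit_image[OF assms(1,4) st(2) y(1)] y(2) by auto
    show "set_pow G Y (-1) \<subseteq> set_sum G Y Y"
    proof
      fix w assume "w \<in> set_pow G Y (-1)"
      then obtain z where z: "z \<in> Y" "w = z [^]\<^bsub>G\<^esub> (-1::int)" by (auto simp: set_pow_def)
      have "z \<in> carrier G" using z Ysub[OF y(1)] y(2) by auto
      hence "w = \<sigma> z \<otimes>\<^bsub>G\<^esub> \<tau> z" using eqi z by simp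
      moreover have "\<sigma> z \<in> Y" "\<tau> z \<in> Y" using s1 z(1) by auto
      ultimately show "w \<in> set_sum G Y Y" by (auto simp: set_sum_def)
    qed
  qed
  show ?thesis using P1 P2 by blast
qed

end
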